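(* Let $q$ be a prime power and $r\ge 0$, $v$ integers. There exists a spanning projective $(r+1)$-cylinder in $\mathrm{PG}(v-1,q)$ if and only if $r+2\le v\le r+q$.
   Context: $\mathrm{PG}(v-1,q)$ is the projective space of $\mathbb{F}_q^v$; a $k$-space is a $k$-dimensional subspace of $\mathbb{F}_q^v$ (points are $1$-spaces, hyperplanes are $(v-1)$-spaces). An $(r+1)$-cylinder is a multiset of $q^{r+1}$ points which arises as the union (counted with multiplicity) of the point sets $L_1\setminus F,\dots,L_q\setminus F$, where $L_1,\dots,L_q$ are $(r+1)$-spaces and $F$ is an $r$-space contained in every $L_i$ (here $L_i\setminus F$ means the set of points of $L_i$ not contained in $F$). The cylinder is called projective if this multiset is a set (no point has multiplicity $>1$), and spanning if its points span $\mathbb{F}_q^v$. *)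

theory Defs
  imports Complex_Main "HOL-Library.Multiset" "HOL-Library.Function_Algebras"
begin

text \<open>Model of F_q^v: functions nat => 'a (pointwise scaling) vanishing from index v on.
  The field F_q is an arbitrary finite field type 'a, q = card (UNIV :: 'a set).\<close>

definition fscale :: "'a::field \<Rightarrow> (nat \<Rightarrow> 'a) \<Rightarrow> (nat \<Rightarrow> 'a)" where
  "fscale c x = (\<lambda>i. c * x i)"

global_interpretation fvs: vector_space "fscale :: 'a::field \<Rightarrow> (nat \<Rightarrow> 'a) \<Rightarrow> _"
  by unfold_locales (auto simp: fscale_def fun_eq_iff algebra_simps)

definition ambient :: "nat \<Rightarrow> (nat \<Rightarrow> 'a::field) set" where
  "ambient v = {x. \<forall>i\<ge>v. x i = 0}"

definition kspace :: "nat \<Rightarrow> nat \<Rightarrow> (nat \<Rightarrow> 'a::field) set \<Rightarrow> bool" where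
  "kspace v k S \<longleftrightarrow> fvs.subspace S \<and> S \<subseteq> ambient v \<and> fvs.dim S = k"

definition points :: "nat \<Rightarrow> (nat \<Rightarrow> 'a::field) set \<Rightarrow> (nat \<Rightarrow> 'a) set set" where
  "points v S = {P. kspace v 1 P \<and> P \<subseteq> S}"

definition cylinder :: "nat \<Rightarrow> nat \<Rightarrow> (nat \<Rightarrow> 'a::{finite,field}) set multiset \<Rightarrow> bool" where
  "cylinder v r C \<longleftrightarrow>
     (\<exists>L F. kspace v r F \<and> (\<forall>i<card (UNIV :: 'a set). kspace v (r+1) (L i) \<and> F \<subseteq> L i) \<and>
        C = (\<Sum>i<card (UNIV :: 'a set). mset_set (points v (L i) - points v F)))"

definition projective_mset :: "'b multiset \<Rightarrow> bool" where
  "projective_mset C \<longleftrightarrow> (\<forall>x. count C x \<le> 1)"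

definition spanning :: "nat \<Rightarrow> (nat \<Rightarrow> 'a::field) set multiset \<Rightarrow> bool" where
  "spanning v C \<longleftrightarrow> fvs.span (\<Union> (set_mset C)) = ambient v"

end

theory Submission imports Defs begin

definition ev :: "nat \<Rightarrow> nat \<Rightarrow> 'a::field" where
  "ev k = (\<lambda>i. if i = k then 1 else 0)"

lemma sum_fun_apply: "(\<Sum>k\<in>K. (f k :: nat \<Rightarrow> 'a::field)) j = (\<Sum>k\<in>K. f k j)"
  by (induction K rule: infinite_finite_induct) auto

lemma ambient_subspace: "fvs.subspace (ambient v :: (nat \<Rightarrow> 'a::field) set)"
  unfolding ambient_def by (rule fvs.subspaceI) (auto simp: fscale_def)

lemma supp_in_span:
  assumes "\<forall>j\<ge>n. x j = (0::'a::field)"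
  shows "x \<in> fvs.span (ev ` {..<n})"
proof -
  have "x = (\<Sum>k<n. fscale (x k) (ev k))"
  proof
    fix j
    have "(\<Sum>k<n. fscale (x k) (ev k)) j = (\<Sum>k<n. if j = k then x j else 0)"
      unfolding sum_fun_apply by (rule sum.cong) (auto simp: fscale_def ev_def)
    also have "\<dots> = x j" using assms by (auto simp: not_less)
    finally show "x j = (\<Sum>k<n. fscale (x k) (ev k)) j" by simp
  qed
  also have "\<dots> \<in> fvs.span (ev ` {..<n})"
    by (intro fvs.span_sum fvs.span_scale fvs.span_base) auto
  finally show ?thesis .
qed

lemma ambient_span: "ambient v = fvs.span (ev ` {..<v} :: (nat \<Rightarrow> 'a::field) set)"
proof
  show "ambient v \<subseteq> fvs.span (ev ` {..<v})"
    using supp_in_span unfolding ambient_def by blast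
  show "fvs.span (ev ` {..<v}) \<subseteq> (ambient v :: (nat \<Rightarrow> 'a) set)"
    by (rule fvs.span_minimal[OF _ ambient_subspace]) (auto simp: ambient_def ev_def)
qed

lemma span_ev_zero:
  assumes "x \<in> fvs.span (ev ` K :: (nat \<Rightarrow> 'a::field) set)" "j \<notin> K"
  shows "x j = 0"
proof -
  have "fvs.span (ev ` K :: (nat \<Rightarrow> 'a::field) set) \<subseteq> {x. x j = 0}"
    by (rule fvs.span_minimal) (use assms(2) in \<open>auto simp: ev_def fscale_def intro!: fvs.subspaceI\<close>)
  with assms show ?thesis by auto
qed

lemma inj_ev: "inj (ev :: nat \<Rightarrow> nat \<Rightarrow> 'a::field)"
  by (rule injI) (metis ev_def one_neq_zero)

lemma indep_ev: "fvs.independent (ev ` {..<n} :: (nat \<Rightarrow> 'a::field) set)"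
proof (induction n)
  case 0 then show ?case by (simp add: fvs.independent_empty)
next
  case (Suc n)
  have "ev ` {..<Suc n} = insert (ev n) (ev ` {..<n} :: (nat \<Rightarrow> 'a) set)"
    by (auto simp: lessThan_Suc)
  moreover have "ev n \<notin> fvs.span (ev ` {..<n} :: (nat \<Rightarrow> 'a) set)"
    using span_ev_zero[of "ev n" "{..<n}" n] by (auto simp: ev_def)
  ultimately show ?case using Suc fvs.independent_insertI by metis
qed

lemma card_ev: "card (ev ` {..<n} :: (nat \<Rightarrow> 'a::field) set) = n"
proof -
  have "inj_on (ev :: nat \<Rightarrow> nat \<Rightarrow> 'a) {..<n}" using inj_ev by (rule inj_on_subset) auto
  then show ?thesis by (simp add: card_image)
qed

lemma dim_ambient: "fvs.dim (ambient v :: (nat \<Rightarrow> 'a::field) set) = v"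
  using fvs.dim_span_eq_card_independent[OF indep_ev, of v] ambient_span card_ev by metis

lemma indep_le_dim:
  assumes "fvs.independent B" "B \<subseteq> T" "T \<subseteq> fvs.span W" "finite W"
  shows "finite B \<and> card B \<le> fvs.dim (T :: (nat \<Rightarrow> 'a::field) set)"
proof -
  obtain C where C: "C \<subseteq> T" "fvs.independent C" "T \<subseteq> fvs.span C" "card C = fvs.dim T"
    using fvs.basis_exists by blast
  have "finite C" using fvs.independent_span_bound[OF assms(4) C(2)] C(1) assms(3) by blast
  then show ?thesis using fvs.independent_span_bound[OF _ assms(1), of C] C assms(2) by auto
qed

lemma dim_mono_fd:
  assumes "S \<subseteq> T" "T \<subseteq> fvs.span W" "finite W"
  shows "fvs.dim (S :: (nat \<Rightarrow> 'a::field) set) \<le> fvs.dim T"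
proof -
  obtain B where B: "B \<subseteq> S" "fvs.independent B" "S \<subseteq> fvs.span B" "card B = fvs.dim S"
    using fvs.basis_exists by blast
  then show ?thesis using indep_le_dim[OF B(2) _ assms(2,3)] assms(1) by auto
qed

lemma eq_dim_fd:
  assumes "fvs.subspace S" "fvs.subspace T" "S \<subseteq> T" "T \<subseteq> fvs.span W" "finite W"
    "fvs.dim T \<le> fvs.dim S"
  shows "S = (T :: (nat \<Rightarrow> 'a::field) set)"
proof (rule ccontr)
  assume "S \<noteq> T"
  then obtain t where t: "t \<in> T" "t \<notin> S" using assms(3) by blast
  obtain B where B: "B \<subseteq> S" "fvs.independent B" "S \<subseteq> fvs.span B" "card B = fvs.dim S"
    using fvs.basis_exists by blast
  have "fvs.span B \<subseteq> S" using fvs.span_minimal[OF B(1) assms(1)] .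
  then have tB: "t \<notin> fvs.span B" using t by blast
  have fB: "finite B" using indep_le_dim[OF B(2) _ assms(4,5)] B(1) assms(3) by auto
  have "fvs.independent (insert t B)" using fvs.independent_insertI[OF tB B(2)] .
  from indep_le_dim[OF this _ assms(4,5)] have "card (insert t B) \<le> fvs.dim T"
    using B(1) assms(3) t by auto
  moreover have "card (insert t B) = Suc (card B)" using fB tB fvs.span_base by (metis card_insert_disjoint)
  ultimately show False using B(4) assms(6) by auto
qed

lemma card_ge2: "2 \<le> card (UNIV :: 'a::{finite,field} set)"
proof -
  have "card {0::'a, 1} = 2" by simp
  moreover have "card {0::'a, 1} \<le> card (UNIV :: 'a set)" by (rule card_mono) auto
  ultimately show ?thesis by linarith
qed

lemma finite_ambient: "finite (ambient v :: (nat \<Rightarrow> 'a::{finite,field}) set)"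
proof -
  have "ambient v \<subseteq> (\<lambda>xs i. if i < v then xs ! i else (0::'a)) ` {xs. set xs \<subseteq> UNIV \<and> length xs = v}"
  proof
    fix x :: "nat \<Rightarrow> 'a" assume "x \<in> ambient v"
    then have "x = (\<lambda>i. if i < v then map x [0..<v] ! i else 0)"
      by (auto simp: ambient_def fun_eq_iff)
    then show "x \<in> (\<lambda>xs i. if i < v then xs ! i else (0::'a)) ` {xs. set xs \<subseteq> UNIV \<and> length xs = v}"
      by (intro image_eqI[where x="map x [0..<v]"]) auto
  qed
  moreover have "finite {xs. set xs \<subseteq> (UNIV::'a set) \<and> length xs = v}"
    by (rule finite_lists_length_eq) simp
  ultimately show ?thesis by (meson finite_imageI finite_subset)
qed

lemma finite_points: "finite (points v S :: (nat \<Rightarrow> 'a::{finite,field}) set set)"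
proof -
  have "points v S \<subseteq> Pow (ambient v)" by (auto simp: points_def kspace_def)
  then show ?thesis using finite_ambient by (meson finite_Pow_iff finite_subset)
qed

lemma point_span:
  assumes "x \<noteq> 0" "x \<in> ambient v"
  shows "kspace v 1 (fvs.span {x :: nat \<Rightarrow> 'a::field})"
proof -
  have "fvs.independent {x}" using assms(1) fvs.dependent_single by blast
  then have "fvs.dim (fvs.span {x}) = 1" using fvs.dim_span_eq_card_independent by fastforce
  moreover have "fvs.span {x} \<subseteq> ambient v"
    using fvs.span_minimal[OF _ ambient_subspace] assms(2) by blast
  ultimately show ?thesis unfolding kspace_def by (simp add: fvs.subspace_span)
qed

lemma necessity:
  fixes C :: "(nat \<Rightarrow> 'a::{finite,field}) set multiset"
  assumes cyl: "cylinder v r C" and proj: "projective_mset C" and sp: "spanning v C"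
  shows "r + 2 \<le> v \<and> v \<le> r + card (UNIV :: 'a set)"
proof -
  define q where "q = card (UNIV :: 'a set)"
  have q2: "2 \<le> q" using card_ge2 q_def by metis
  obtain L F where kF: "kspace v r F" and kL: "\<And>i. i < q \<Longrightarrow> kspace v (r+1) (L i) \<and> F \<subseteq> L i"
    and C: "C = (\<Sum>i<q. mset_set (points v (L i) - points v F))"
    using cyl unfolding cylinder_def q_def by blast
  define A where "A i = points v (L i) - points v F" for i
  have finA: "finite (A i)" for i unfolding A_def using finite_points by blast
  define W where "W = (ev ` {..<v} :: (nat \<Rightarrow> 'a) set)"
  have amb: "ambient v \<subseteq> fvs.span W" "finite W" unfolding W_def using ambient_span by auto
  have dimA: "fvs.dim (ambient v :: (nat \<Rightarrow> 'a) set) = v" by (rule dim_ambient)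
  have Ls: "fvs.subspace (L i)" "L i \<subseteq> ambient v" "fvs.dim (L i) = r + 1" "F \<subseteq> L i" if "i < q" for i
    using kL[OF that] unfolding kspace_def by auto
  have Fs: "fvs.subspace F" "F \<subseteq> ambient v" "fvs.dim F = r" using kF unfolding kspace_def by auto
  have LnF: "\<not> L i \<subseteq> F" if "i < q" for i
  proof
    assume "L i \<subseteq> F"
    from dim_mono_fd[OF this subset_trans[OF Fs(2) amb(1)] amb(2)] Fs Ls[OF that] show False by auto
  qed
  have v1: "r + 1 \<le> v"
  proof -
    have "L 0 \<subseteq> ambient v" using Ls(2) q2 by auto
    from dim_mono_fd[OF this amb] have "fvs.dim (L 0) \<le> v" using dimA by simp
    then show ?thesis using Ls(3)[of 0] q2 by simp
  qed
  have v2: "v \<noteq> r + 1"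
  proof
    assume vr: "v = r + 1"
    have Lamb: "L i = ambient v" if "i < q" for i
      by (rule eq_dim_fd[OF Ls(1)[OF that] ambient_subspace Ls(2)[OF that] amb])
         (use Ls(3)[OF that] dimA vr in auto)
    obtain x where x: "x \<in> L 0" "x \<notin> F" using LnF[of 0] q2 by auto
    have x0: "x \<noteq> 0" using x fvs.subspace_0[OF Fs(1)] by auto
    define P where "P = fvs.span {x}"
    have "P \<in> A i" if "i < q" for i
    proof -
      have "x \<in> ambient v" using x Ls(2)[of 0] q2 by auto
      then have "kspace v 1 P" using point_span x0 P_def by blast
      moreover have "P \<subseteq> L i" unfolding P_def
        using fvs.span_minimal[OF _ Ls(1)[OF that]] x Lamb[OF that] Lamb[of 0] q2 by auto
      moreover have "\<not> P \<subseteq> F" unfolding P_def using x fvs.span_base[of x "{x}"] by auto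
      ultimately show ?thesis unfolding A_def points_def by auto
    qed
    then have "(\<Sum>i\<in>{0,1::nat}. count (mset_set (A i)) P) \<le> (\<Sum>i<q. count (mset_set (A i)) P)"
      using q2 by (intro sum_mono2) auto
    moreover have "(\<Sum>i\<in>{0,1::nat}. count (mset_set (A i)) P) = 2"
      using \<open>\<And>i. i < q \<Longrightarrow> P \<in> A i\<close> q2 finA by (simp add: count_mset_set)
    ultimately have "2 \<le> count C P" unfolding C A_def[symmetric] by (simp add: count_sum)
    moreover have "count C P \<le> 1" using proj unfolding projective_mset_def by blast
    ultimately show False by linarith
  qed
  have v3: "v \<le> r + q"
  proof -
    define x where "x i = (SOME y. y \<in> L i \<and> y \<notin> F)" for i
    have x: "x i \<in> L i \<and> x i \<notin> F" if "i < q" for i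
    proof -
      have "\<exists>y. y \<in> L i \<and> y \<notin> F" using LnF[OF that] by blast
      then show ?thesis unfolding x_def by (rule someI_ex)
    qed
    obtain BF where BF: "BF \<subseteq> F" "fvs.independent BF" "F \<subseteq> fvs.span BF" "card BF = fvs.dim F"
      using fvs.basis_exists by blast
    have spBF: "fvs.span BF = F" using BF fvs.span_minimal[OF BF(1) Fs(1)] by auto
    have finBF: "finite BF" using indep_le_dim[OF BF(2) BF(1) subset_trans[OF Fs(2) amb(1)] amb(2)] by blast
    define X where "X = BF \<union> x ` {..<q}"
    have LX: "L i \<subseteq> fvs.span X" if "i < q" for i
    proof -
      have xi: "x i \<notin> fvs.span BF" using x[OF that] spBF by auto
      have ind: "fvs.independent (insert (x i) BF)" using fvs.independent_insertI[OF xi BF(2)] .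
      have cd: "card (insert (x i) BF) = r + 1"
      proof -
        have "x i \<notin> BF" using xi fvs.span_base by blast
        then show ?thesis using card_insert_disjoint[OF finBF] BF(4) Fs(3) by simp
      qed
      have sub: "fvs.span (insert (x i) BF) \<subseteq> L i"
        using fvs.span_minimal[OF _ Ls(1)[OF that]] x[OF that] BF(1) Ls(4)[OF that] by auto
      have "fvs.span (insert (x i) BF) = L i"
        by (rule eq_dim_fd[OF fvs.subspace_span Ls(1)[OF that] sub subset_trans[OF Ls(2)[OF that] amb(1)] amb(2)])
           (use Ls(2,3)[OF that] cd fvs.dim_span_eq_card_independent[OF ind] in auto)
      moreover have "fvs.span (insert (x i) BF) \<subseteq> fvs.span X"
        by (rule fvs.span_mono) (use that in \<open>auto simp: X_def\<close>)
      ultimately show ?thesis by auto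
    qed
    have "\<Union> (set_mset C) \<subseteq> fvs.span X"
    proof
      fix y assume "y \<in> \<Union> (set_mset C)"
      then obtain P i where "i < q" "P \<in> A i" "y \<in> P"
        unfolding C A_def[symmetric] using finA by (auto simp: set_mset_sum)
      then have "P \<subseteq> L i" unfolding A_def points_def by simp
      then show "y \<in> fvs.span X" using LX[OF \<open>i < q\<close>] \<open>y \<in> P\<close> by blast
    qed
    then have "fvs.span (\<Union> (set_mset C)) \<subseteq> fvs.span X"
      by (rule fvs.span_minimal[OF _ fvs.subspace_span])
    then have "ambient v \<subseteq> fvs.span X"
      using sp unfolding spanning_def by simp
    moreover have "finite X" unfolding X_def using finBF by simp
    ultimately have "fvs.dim (ambient v :: (nat \<Rightarrow> 'a) set) \<le> card X"
      by (rule fvs.dim_le_card)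
    also have "card X \<le> card BF + card (x ` {..<q})" unfolding X_def by (rule card_Un_le)
    also have "\<dots> \<le> r + q" using BF(4) Fs(3) card_image_le[of "{..<q}" x] by auto
    finally show ?thesis using dimA by simp
  qed
  show ?thesis using v1 v2 v3 q_def by auto
qed


lemma key_w:
  fixes c :: "nat \<Rightarrow> 'a::field"
  assumes w_def: "\<And>i. w i = (if i < n then ev (r+i) else ev r + fscale (c (i-n)) (ev (r+1)))"
    and cnz: "\<And>i. i \<ge> n \<Longrightarrow> i < q \<Longrightarrow> c (i - n) \<noteq> 0"
    and cinj: "\<And>i j. i \<ge> n \<Longrightarrow> i < q \<Longrightarrow> j \<ge> n \<Longrightarrow> j < q \<Longrightarrow> c (i - n) = c (j - n) \<Longrightarrow> i = j"
    and n2: "2 \<le> n"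
    and ij: "i < q" "j < q"
    and a: "a \<noteq> 0" and b: "b \<noteq> 0"
    and eq: "\<forall>k\<ge>r. a * w i k = b * w j k"
  shows "i = j"
proof (rule ccontr)
  assume ne: "i \<noteq> j"
  have e1: "a * w i r = b * w j r" and e2: "a * w i (r+1) = b * w j (r+1)"
    and e3: "a * w i (r+i) = b * w j (r+i)" and e4: "a * w i (r+j) = b * w j (r+j)"
    using eq by auto
  consider "i < n" "j < n" | "i < n" "\<not> j < n" | "\<not> i < n" "j < n" | "\<not> i < n" "\<not> j < n" by blast
  then show False
  proof cases
    case 1
    then show ?thesis using e3 ne a by (simp add: w_def ev_def)
  next
    case 2
    have cj: "c (j - n) \<noteq> 0" using cnz 2 ij by auto
    show ?thesis
    proof (cases "i = 0")
      case True
      then show ?thesis using e2 2 b cj by (simp add: w_def ev_def fscale_def)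
    next
      case False
      then show ?thesis using e1 2 b by (simp add: w_def ev_def fscale_def)
    qed
  next
    case 3
    have ci: "c (i - n) \<noteq> 0" using cnz 3 ij by auto
    show ?thesis
    proof (cases "j = 0")
      case True
      then show ?thesis using e2 3 a ci by (simp add: w_def ev_def fscale_def)
    next
      case False
      then show ?thesis using e1 3 a by (simp add: w_def ev_def fscale_def)
    qed
  next
    case 4
    have "a = b" using e1 4 by (simp add: w_def ev_def fscale_def)
    moreover have "a * c (i - n) = b * c (j - n)" using e2 4 by (simp add: w_def ev_def fscale_def)
    ultimately have "c (i - n) = c (j - n)" using a by simp
    then show ?thesis using cinj 4 ij ne by auto
  qed
qed

lemma span_tail:
  assumes "x \<in> fvs.span (insert (w :: nat \<Rightarrow> 'a::field) (ev ` {..<r}))"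
  shows "\<exists>a. \<forall>k\<ge>r. x k = a * w k"
proof -
  have "fvs.span (insert w (ev ` {..<r})) \<subseteq> {x. \<exists>a. \<forall>k\<ge>r. x k = a * w k}"
  proof (rule fvs.span_minimal)
    show "insert w (ev ` {..<r}) \<subseteq> {x. \<exists>a. \<forall>k\<ge>r. x k = a * w k}"
    proof
      fix y assume "y \<in> insert w (ev ` {..<r})"
      then show "y \<in> {x. \<exists>a. \<forall>k\<ge>r. x k = a * w k}"
      proof
        assume "y = w" then show ?thesis by (auto intro: exI[where x=1])
      next
        assume "y \<in> ev ` {..<r}" then show ?thesis by (auto simp: ev_def intro!: exI[where x=0])
      qed
    qed
    show "fvs.subspace {x. \<exists>a. \<forall>k\<ge>r. x k = a * w k}"
    proof (rule fvs.subspaceI)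
      show "0 \<in> {x. \<exists>a. \<forall>k\<ge>r. x k = a * w k}" by (auto intro!: exI[where x=0])
      fix x y assume "x \<in> {x. \<exists>a. \<forall>k\<ge>r. x k = a * w k}" "y \<in> {x. \<exists>a. \<forall>k\<ge>r. x k = a * w k}"
      then obtain a1 a2 where "\<forall>k\<ge>r. x k = a1 * w k" "\<forall>k\<ge>r. y k = a2 * w k" by auto
      then show "x + y \<in> {x. \<exists>a. \<forall>k\<ge>r. x k = a * w k}"
        by (auto intro!: exI[where x="a1+a2"] simp: distrib_right)
    next
      fix c x assume "x \<in> {x. \<exists>a. \<forall>k\<ge>r. x k = a * w k}"
      then obtain a1 where "\<forall>k\<ge>r. x k = a1 * w k" by auto
      then show "fscale c x \<in> {x. \<exists>a. \<forall>k\<ge>r. x k = a * w k}"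
        by (auto intro!: exI[where x="c*a1"] simp: fscale_def mult.assoc)
    qed
  qed
  with assms show ?thesis by blast
qed

lemma sufficiency:
  assumes v1: "r + 2 \<le> v" and v2: "v \<le> r + card (UNIV :: 'a set)"
  shows "\<exists>C :: (nat \<Rightarrow> 'a::{finite,field}) set multiset. cylinder v r C \<and> projective_mset C \<and> spanning v C"
proof -
  define q where "q = card (UNIV :: 'a set)"
  define n where "n = v - r"
  have n2: "2 \<le> n" and nq: "n \<le> q" using v1 v2 unfolding n_def q_def by auto
  have cardnz: "card (UNIV - {0::'a}) = q - 1" unfolding q_def by (simp add: card_Diff_singleton)
  obtain c :: "nat \<Rightarrow> 'a" where cb: "bij_betw c {0..<q-1} (UNIV - {0})"
    using ex_bij_betw_nat_finite[of "UNIV - {0::'a}"] cardnz by auto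
  have cnz: "c (i - n) \<noteq> 0" if "i \<ge> n" "i < q" for i
    using bij_betw_apply[OF cb, of "i - n"] that n2 by auto
  have cinj: "i = j" if "i \<ge> n" "i < q" "j \<ge> n" "j < q" "c (i - n) = c (j - n)" for i j
  proof -
    have "i - n = j - n"
      using bij_betw_imp_inj_on[OF cb] that n2 unfolding inj_on_def by auto
    then show ?thesis using that by auto
  qed
  define w :: "nat \<Rightarrow> nat \<Rightarrow> 'a" where
    "w i = (if i < n then ev (r+i) else ev r + fscale (c (i-n)) (ev (r+1)))" for i
  define Er :: "(nat \<Rightarrow> 'a) set" where "Er = ev ` {..<r}"
  define F where "F = fvs.span Er"
  define L where "L i = fvs.span (insert (w i) Er)" for i
  define A where "A i = points v (L i) - points v F" for i
  define C where "C = (\<Sum>i<q. mset_set (A i))"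
  have finA: "finite (A i)" for i unfolding A_def using finite_points by blast
  have wcoord: "w i j \<noteq> 0 \<and> r \<le> j" if "j = (if i < n then r + i else r)" for i j
    using that by (auto simp: w_def ev_def fscale_def)
  have wnF: "w i \<notin> F" for i
  proof
    assume "w i \<in> F"
    then have "w i (if i < n then r + i else r) = 0"
      unfolding F_def Er_def by (rule span_ev_zero) auto
    with wcoord[OF refl, of i] show False by simp
  qed
  have wamb: "w i \<in> ambient v" for i
    using n2 by (auto simp: w_def ev_def fscale_def ambient_def n_def)
  have Eramb: "Er \<subseteq> ambient v" using v1 by (auto simp: Er_def ev_def ambient_def)
  have indEr: "fvs.independent Er" unfolding Er_def by (rule indep_ev)
  have cardEr: "card Er = r" unfolding Er_def by (rule card_ev)
  have kF: "kspace v r F"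
    unfolding kspace_def F_def
    using fvs.subspace_span fvs.span_minimal[OF Eramb ambient_subspace]
      fvs.dim_span_eq_card_independent[OF indEr] cardEr by auto
  have kL: "kspace v (r+1) (L i) \<and> F \<subseteq> L i" for i
  proof -
    have wE: "w i \<notin> fvs.span Er" using wnF F_def by auto
    have ind: "fvs.independent (insert (w i) Er)" by (rule fvs.independent_insertI[OF wE indEr])
    have "finite Er" unfolding Er_def by simp
    then have cd: "card (insert (w i) Er) = r + 1" using wE fvs.span_base cardEr
      by (metis Suc_eq_plus1 card_insert_disjoint)
    have "L i \<subseteq> ambient v" unfolding L_def
      using fvs.span_minimal[OF _ ambient_subspace] Eramb wamb by (metis insert_subset)
    moreover have "F \<subseteq> L i" unfolding F_def L_def by (rule fvs.span_mono) auto
    ultimately show ?thesis unfolding kspace_def L_def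
      using fvs.subspace_span fvs.dim_span_eq_card_independent[OF ind] cd by auto
  qed
  have Fsub: "fvs.subspace F" unfolding F_def by (rule fvs.subspace_span)
  have Lsub: "fvs.subspace (L i)" for i unfolding L_def by (rule fvs.subspace_span)
  have tailF: "x \<in> F" if "\<forall>k\<ge>r. x k = 0" for x
    unfolding F_def Er_def by (rule supp_in_span) (use that in auto)
  have cyl: "cylinder v r C"
    unfolding cylinder_def
  proof (rule exI[of _ L], rule exI[of _ F], intro conjI)
    show "kspace v r F" by (rule kF)
    show "\<forall>i<card (UNIV :: 'a set). kspace v (r+1) (L i) \<and> F \<subseteq> L i" using kL by simp
    show "C = (\<Sum>i<card (UNIV :: 'a set). mset_set (points v (L i) - points v F))"
      unfolding C_def A_def q_def by simp
  qed
  have disj: "i = j" if "i < q" "j < q" "P \<in> A i" "P \<in> A j" for i j P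
  proof -
    from that(3,4) have P: "P \<subseteq> L i" "P \<subseteq> L j" "\<not> P \<subseteq> F" unfolding A_def points_def by auto
    then obtain p where p: "p \<in> L i" "p \<in> L j" "p \<notin> F" by blast
    obtain a where a: "\<forall>k\<ge>r. p k = a * w i k" using span_tail p(1) unfolding L_def Er_def by blast
    obtain b where b: "\<forall>k\<ge>r. p k = b * w j k" using span_tail p(2) unfolding L_def Er_def by blast
    obtain k where k: "k \<ge> r" "p k \<noteq> 0" using tailF p(3) by blast
    have "a \<noteq> 0" using a k by auto
    moreover have "b \<noteq> 0" using b k by auto
    moreover have "\<forall>k\<ge>r. a * w i k = b * w j k" using a b by auto
    ultimately show "i = j"
      using key_w[OF w_def cnz cinj n2 that(1,2)] by blast
  qed
  have proj: "projective_mset C"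
    unfolding projective_mset_def
  proof
    fix P
    have cnt: "count C P = (\<Sum>i<q. if P \<in> A i then 1 else 0)"
      unfolding C_def count_sum by (rule sum.cong) (auto simp: count_mset_set' finA)
    show "count C P \<le> 1"
    proof (cases "\<exists>i0<q. P \<in> A i0")
      case True
      then obtain i0 where i0: "i0 < q" "P \<in> A i0" by blast
      have "(\<Sum>i<q. if P \<in> A i then 1 else 0) = (\<Sum>i<q. if i = i0 then 1 else (0::nat))"
        by (rule sum.cong) (use i0 disj in auto)
      also have "\<dots> = 1" using i0 by simp
      finally show ?thesis using cnt by simp
    next
      case False
      then have "(\<Sum>i<q. if P \<in> A i then 1 else 0) = (0::nat)" by (intro sum.neutral) auto
      then show ?thesis using cnt by simp
    qed
  qed
  define U where "U = \<Union> (set_mset C)"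
  have U: "U = \<Union> (\<Union>i<q. A i)" unfolding U_def C_def using finA by (simp add: set_mset_sum)
  have inU: "y \<in> U" if "i < q" "y \<in> L i" "y \<notin> F" for i y
  proof -
    have y0: "y \<noteq> 0" using that(3) fvs.subspace_0[OF Fsub] by auto
    have "y \<in> ambient v" using kL[of i] that(2) unfolding kspace_def by auto
    then have "kspace v 1 (fvs.span {y})" using point_span y0 by blast
    moreover have "fvs.span {y} \<subseteq> L i" using fvs.span_minimal[OF _ Lsub] that(2) by auto
    moreover have "y \<in> fvs.span {y}" by (rule fvs.span_base) simp
    ultimately have "fvs.span {y} \<in> A i" "y \<in> fvs.span {y}"
      using that(3) unfolding A_def points_def by auto
    then show ?thesis using U that(1) by blast
  qed
  have evU: "ev k \<in> fvs.span U" if "r \<le> k" "k < v" for k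
  proof -
    have i: "k - r < n" "k - r < q" using that nq unfolding n_def by auto
    have wk: "w (k - r) = ev k" using i that by (simp add: w_def)
    have "ev k \<in> L (k - r)" unfolding L_def using wk fvs.span_base[of "w (k-r)"] by auto
    moreover have "ev k \<notin> F"
    proof
      assume "ev k \<in> F"
      then have "(ev k :: nat \<Rightarrow> 'a) k = 0" unfolding F_def Er_def by (rule span_ev_zero) (use that in auto)
      then show False by (simp add: ev_def)
    qed
    ultimately show ?thesis using inU[OF i(2)] fvs.span_base by blast
  qed
  have evU2: "ev k \<in> fvs.span U" if "k < r" for k
  proof -
    have w0: "w 0 = ev r" using n2 by (simp add: w_def)
    have "ev r + ev k \<in> L 0" unfolding L_def
      by (rule fvs.span_add) (use w0 fvs.span_base[of _ "insert (w 0) Er"] that in \<open>auto simp: Er_def\<close>)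
    moreover have "ev r + ev k \<notin> F"
    proof
      assume "ev r + ev k \<in> F"
      then have "(ev r + ev k :: nat \<Rightarrow> 'a) r = 0" unfolding F_def Er_def by (rule span_ev_zero) auto
      then show False using that by (simp add: ev_def)
    qed
    ultimately have "ev r + ev k \<in> fvs.span U" using inU[of 0] n2 nq fvs.span_base by auto
    moreover have "ev r \<in> fvs.span U" using evU v1 by auto
    ultimately have "(ev r + ev k) - ev r \<in> fvs.span U" by (rule fvs.span_diff)
    then show ?thesis by simp
  qed
  have "U \<subseteq> ambient v" unfolding U by (auto simp: A_def points_def kspace_def)
  then have s1: "fvs.span U \<subseteq> ambient v" by (rule fvs.span_minimal[OF _ ambient_subspace])
  have "ev ` {..<v} \<subseteq> fvs.span U"
  proof
    fix y assume "y \<in> (ev ` {..<v} :: (nat \<Rightarrow> 'a) set)"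
    then obtain k where "k < v" "y = ev k" by auto
    then show "y \<in> fvs.span U" using evU evU2 by (cases "r \<le> k") auto
  qed
  then have "ambient v \<subseteq> fvs.span U"
    unfolding ambient_span by (rule fvs.span_minimal[OF _ fvs.subspace_span])
  with s1 have "spanning v C" unfolding spanning_def U_def by auto
  with cyl proj show ?thesis by blast
qed

theorem mainTheorem1:
  fixes r v :: nat
  shows "(\<exists>C :: (nat \<Rightarrow> 'a::{finite,field}) set multiset.
            cylinder v r C \<and> projective_mset C \<and> spanning v C)
         \<longleftrightarrow> r + 2 \<le> v \<and> v \<le> r + card (UNIV :: 'a set)"
  using necessity sufficiency by metis

end
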